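(* Let $G$ be a signature that is not IM-terraced but all of whose pinnings $G_p$ with $\mathrm{dom}(p)\ne\emptyset$ are IM-terraced. Then $G$ is equivalent (by renaming variables) to a signature $F$ on $\{1,\dots,k\}$ such that: (a) the pinning of $F$ by $\{1\mapsto0,2\mapsto1\}$ is identically zero; and (b) there exist a configuration $z\in\{0,1\}^{\{3,\dots,k\}}$ and a non-degenerate signature $T:\{0,1\}^2\to\mathbb R_{\ge0}$ such that for all $x,y_3,\dots,y_k\in\{0,1\}$, $F(x,x,y_3,\dots,y_k)=T(y_3,x)$ if $y=z$ or $y=\overline z$, and $F(x,x,y_3,\dots,y_k)=0$ otherwise, where $y=(y_3,\dots,y_k)$.
   Context: A signature on $V$ is a function $\{0,1\}^V\to\mathbb R_{\ge0}$. A partial configuration $p$ is an element of $\{0,1\}^{\mathrm{dom}(p)}$ with $\mathrm{dom}(p)\subseteq V$; the pinning $F_p$ on $V\setminus\mathrm{dom}(p)$ is $F_p(x)=F(x,p)$; $p^{\{i\}}$ is $p$ with coordinate $i$ flipped. $F$ is IM-terraced if for every partial configuration $p$ and all $i,j\in\mathrm{dom}(p)$ with $p_i\ne p_j$: if $F_p$ is identically zero then $F_{p^{\{i\}}}$ and $F_{p^{\{j\}}}$ are linearly dependent (one is a scalar multiple of the other). An arity-2 signature $T$ is degenerate if $T(a,b)=U(a)U'(b)$ for some functions $U,U'$. $\overline z_i=1-z_i$. *)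

theory Defs
  imports Complex_Main
begin

text \<open>Configurations are total functions 'v => bool (False = 0, True = 1); a signature
  on a finite variable set V is a nonnegative real function of configurations that depends
  only on the values on V. A partial configuration is a pair (D, p) with D the domain; only
  the values of p on D matter.\<close>

definition is_signature :: "'v set \<Rightarrow> (('v \<Rightarrow> bool) \<Rightarrow> real) \<Rightarrow> bool" where
  "is_signature V F \<longleftrightarrow> finite V \<and> (\<forall>x. 0 \<le> F x) \<and>
     (\<forall>x y. (\<forall>v\<in>V. x v = y v) \<longrightarrow> F x = F y)"

definition merge_conf :: "'v set \<Rightarrow> ('v \<Rightarrow> bool) \<Rightarrow> ('v \<Rightarrow> bool) \<Rightarrow> ('v \<Rightarrow> bool)" where
  "merge_conf D p x = (\<lambda>v. if v \<in> D then p v else x v)"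

definition pin :: "(('v \<Rightarrow> bool) \<Rightarrow> real) \<Rightarrow> 'v set \<Rightarrow> ('v \<Rightarrow> bool) \<Rightarrow> (('v \<Rightarrow> bool) \<Rightarrow> real)" where
  "pin F D p = (\<lambda>x. F (merge_conf D p x))"

definition flip :: "('v \<Rightarrow> bool) \<Rightarrow> 'v \<Rightarrow> ('v \<Rightarrow> bool)" where
  "flip p i = p(i := \<not> p i)"

definition lin_dep :: "(('v \<Rightarrow> bool) \<Rightarrow> real) \<Rightarrow> (('v \<Rightarrow> bool) \<Rightarrow> real) \<Rightarrow> bool" where
  "lin_dep f g \<longleftrightarrow> (\<exists>c. \<forall>x. f x = c * g x) \<or> (\<exists>c. \<forall>x. g x = c * f x)"

definition IM_terraced :: "'v set \<Rightarrow> (('v \<Rightarrow> bool) \<Rightarrow> real) \<Rightarrow> bool" where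
  "IM_terraced V F \<longleftrightarrow>
     (\<forall>D p i j. D \<subseteq> V \<longrightarrow> i \<in> D \<longrightarrow> j \<in> D \<longrightarrow> p i \<noteq> p j \<longrightarrow>
        (\<forall>x. pin F D p x = 0) \<longrightarrow>
        lin_dep (pin F D (flip p i)) (pin F D (flip p j)))"

definition degenerate2 :: "(bool \<Rightarrow> bool \<Rightarrow> real) \<Rightarrow> bool" where
  "degenerate2 T \<longleftrightarrow> (\<exists>U U' :: bool \<Rightarrow> real. \<forall>a b. T a b = U a * U' b)"

end

theory Submission
  imports Defs
begin

lemma sig_cong:
  assumes "is_signature V G" "\<And>v. v \<in> V \<Longrightarrow> x v = y v"
  shows "G x = G y"
  using assms unfolding is_signature_def by blast

lemma lin_dep_sym: "lin_dep f g = lin_dep g f"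
  unfolding lin_dep_def by blast

lemma lin_dep_det: "lin_dep f g \<Longrightarrow> f u * g v = f v * g u"
  unfolding lin_dep_def by auto

lemma not_lin_dep_det:
  assumes "\<not> lin_dep f g" shows "\<exists>u v. f u * g v \<noteq> f v * g u"
proof (rule ccontr)
  assume "\<not> ?thesis"
  hence h: "\<And>u v. f u * g v = f v * g u" by blast
  show False
  proof (cases "\<forall>x. g x = 0")
    case True
    hence "\<forall>x. g x = 0 * f x" by simp
    thus False using assms unfolding lin_dep_def by blast
  next
    case False
    then obtain x0 where x0: "g x0 \<noteq> 0" by blast
    have "\<forall>x. f x = (f x0 / g x0) * g x"
    proof
      fix x
      have "f x * g x0 = f x0 * g x" using h by simp
      thus "f x = (f x0 / g x0) * g x" using x0 by (simp add: field_simps)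
    qed
    thus False using assms unfolding lin_dep_def by blast
  qed
qed

lemma main_aux:
  fixes V :: "'v set" and G :: "('v \<Rightarrow> bool) \<Rightarrow> real"
  assumes sigG: "is_signature V G"
    and pinsIM: "\<And>D p. D \<subseteq> V \<Longrightarrow> D \<noteq> {} \<Longrightarrow> IM_terraced (V - D) (pin G D p)"
    and DV: "D \<subseteq> V" and iD: "i \<in> D" and jD: "j \<in> D" and pi: "p i = False" and pj: "p j = True"
    and zero: "\<forall>x. pin G D p x = 0"
    and nld: "\<not> lin_dep (pin G D (flip p i)) (pin G D (flip p j))"
  shows "\<exists>(k::nat) (\<sigma>::nat \<Rightarrow> 'v) (F :: (nat \<Rightarrow> bool) \<Rightarrow> real).
           3 \<le> k \<and> bij_betw \<sigma> {1..k} V \<and> is_signature {1..k} F \<and>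
           (\<forall>y. G y = F (y \<circ> \<sigma>)) \<and>
           (\<forall>x. F (x(1 := False, 2 := True)) = 0) \<and>
           (\<exists>(z :: nat \<Rightarrow> bool) (T :: bool \<Rightarrow> bool \<Rightarrow> real).
              (\<forall>a b. 0 \<le> T a b) \<and> \<not> degenerate2 T \<and>
              (\<forall>(x::bool) (y :: nat \<Rightarrow> bool).
                 F (y(1 := x, 2 := x)) =
                   (if (\<forall>i\<in>{3..k}. y i = z i) \<or> (\<forall>i\<in>{3..k}. y i = (\<not> z i))
                    then T (y 3) x else 0)))"
proof -
  have ij: "i \<noteq> j" using pi pj by auto
  have Dij: "D = {i,j}"
  proof (rule ccontr)
    assume "D \<noteq> {i,j}"
    then obtain l where l: "l \<in> D" "l \<noteq> i" "l \<noteq> j" using iD jD by blast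
    have IM: "IM_terraced (V-{l}) (pin G {l} p)" using pinsIM[of "{l}" p] l DV by auto
    have z: "\<forall>x. pin (pin G {l} p) (D-{l}) p x = 0"
    proof
      fix x
      have "merge_conf {l} p (merge_conf (D-{l}) p x) = merge_conf D p x"
        using l by (auto simp: merge_conf_def)
      thus "pin (pin G {l} p) (D-{l}) p x = 0" using zero by (simp add: pin_def)
    qed
    have e: "pin (pin G {l} p) (D-{l}) (flip p t) = pin G D (flip p t)" if "t \<noteq> l" for t
    proof
      fix x
      have "merge_conf {l} p (merge_conf (D-{l}) (flip p t) x) = merge_conf D (flip p t) x"
        using l that by (auto simp: merge_conf_def flip_def)
      thus "pin (pin G {l} p) (D-{l}) (flip p t) x = pin G D (flip p t) x" by (simp add: pin_def)
    qed
    have "lin_dep (pin (pin G {l} p) (D-{l}) (flip p i)) (pin (pin G {l} p) (D-{l}) (flip p j))"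
      apply (rule IM[unfolded IM_terraced_def, rule_format, of "D-{l}" i j p])
      using z l iD jD DV pi pj by auto
    thus False using e l nld by metis
  qed
  define a where "a = (\<lambda>x. G (x(i:=True, j:=True)))"
  define b where "b = (\<lambda>x. G (x(i:=False, j:=False)))"
  have zG: "G y = 0" if "y i = False" "y j = True" for y
  proof -
    have "merge_conf {i,j} p y = y" using that pi pj by (auto simp: merge_conf_def)
    thus ?thesis using zero Dij by (metis pin_def)
  qed
  have ea: "pin G D (flip p i) = a"
  proof
    fix x
    have "merge_conf {i,j} (flip p i) x = x(i:=True, j:=True)"
      using pi pj ij by (auto simp: merge_conf_def flip_def)
    thus "pin G D (flip p i) x = a x" by (simp add: pin_def a_def Dij)
  qed
  have eb: "pin G D (flip p j) = b"
  proof
    fix x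
    have "merge_conf {i,j} (flip p j) x = x(i:=False, j:=False)"
      using pi pj ij by (auto simp: merge_conf_def flip_def)
    thus "pin G D (flip p j) x = b x" by (simp add: pin_def b_def Dij)
  qed
  define W where "W = V - {i,j}"
  have ijV: "i \<in> V" "j \<in> V" using iD jD DV by auto
  have star: "a u' * b v' = a v' * b u'" if l: "l \<in> W" "u' l = v' l" for l u' v'
  proof -
    define c where "c = u' l"
    define q where "q = (\<lambda>_::'v. c)"
    have IM: "IM_terraced (V-{l}) (pin G {l} q)" using pinsIM[of "{l}" q] l W_def by auto
    have z: "\<forall>x. pin (pin G {l} q) {i,j} p x = 0"
      using l W_def pi pj by (auto simp: pin_def merge_conf_def intro!: zG)
    have "lin_dep (pin (pin G {l} q) {i,j} (flip p i)) (pin (pin G {l} q) {i,j} (flip p j))"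
      apply (rule IM[unfolded IM_terraced_def, rule_format, of "{i,j}" i j p])
      using z l W_def ijV pi pj by auto
    hence d: "pin (pin G {l} q) {i,j} (flip p i) u' * pin (pin G {l} q) {i,j} (flip p j) v'
         = pin (pin G {l} q) {i,j} (flip p i) v' * pin (pin G {l} q) {i,j} (flip p j) u'"
      by (rule lin_dep_det)
    have ma: "merge_conf {l} q (merge_conf {i,j} (flip p i) w) = w(i:=True, j:=True)"
      and mb: "merge_conf {l} q (merge_conf {i,j} (flip p j) w) = w(i:=False, j:=False)"
      if "w l = c" for w
      using that l W_def pi pj ij by (auto simp: merge_conf_def flip_def q_def)
    show ?thesis using d ma[of u'] ma[of v'] mb[of u'] mb[of v'] l
      by (simp add: pin_def a_def b_def c_def)
  qed
  obtain u v where uv: "a u * b v \<noteq> a v * b u"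
    using not_lin_dep_det[OF nld[unfolded ea eb]] by blast
  have vu: "\<forall>l\<in>W. v l = (\<not> u l)"
  proof
    fix l assume l: "l \<in> W"
    show "v l = (\<not> u l)"
    proof (rule ccontr)
      assume "v l \<noteq> (\<not> u l)"
      hence "u l = v l" by auto
      from star[of l u v, OF l this] uv show False by simp
    qed
  qed
  have Wne: "W \<noteq> {}"
  proof
    assume "W = {}"
    hence VV: "V \<subseteq> {i,j}" using W_def by auto
    have "a u = a v" unfolding a_def
      by (rule sig_cong[OF sigG]) (use VV in auto)
    moreover have "b u = b v" unfolding b_def
      by (rule sig_cong[OF sigG]) (use VV in auto)
    ultimately
    show False using uv by simp
  qed
  have finV: "finite V" using sigG is_signature_def by blast
  hence "finite W" using W_def by simp
  then obtain xs where xs: "set xs = W" "distinct xs" using finite_distinct_list by blast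
  define L where "L = i # j # xs"
  define k where "k = length L"
  have dL: "distinct L" using xs ij W_def L_def by auto
  have sL: "set L = V" using xs W_def L_def ijV by auto
  have k3: "3 \<le> k" using Wne xs k_def L_def by (cases xs) auto
  define \<sigma> where "\<sigma> = (!) L \<circ> (\<lambda>m. m - 1)"
  have b1: "bij_betw (\<lambda>m::nat. m - 1) {1..k} {..<k}"
    by (rule bij_betw_byWitness[where f'=Suc]) auto
  have bs: "bij_betw \<sigma> {1..k} V"
    unfolding \<sigma>_def by (rule bij_betw_trans[OF b1 bij_betw_nth[OF dL]]) (auto simp: k_def sL)
  have s1: "\<sigma> 1 = i" "\<sigma> 2 = j" by (auto simp: \<sigma>_def L_def)
  define si where "si = the_inv_into {1..k} \<sigma>"
  have inj: "inj_on \<sigma> {1..k}" using bs bij_betw_def by blast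
  have si1: "si w \<in> {1..k}" "\<sigma> (si w) = w" if "w \<in> V" for w
  proof -
    have "w \<in> \<sigma> ` {1..k}" using that bs by (simp add: bij_betw_def)
    thus "si w \<in> {1..k}" unfolding si_def using the_inv_into_into[OF inj] by blast
    show "\<sigma> (si w) = w" unfolding si_def using f_the_inv_into_f_bij_betw[OF bs] that by blast
  qed
  have si2: "si (\<sigma> m) = m" if "m \<in> {1..k}" for m
    using that inj the_inv_into_f_f si_def by metis
  have sV: "\<sigma> m \<in> V" if "m \<in> {1..k}" for m using bs that bij_betw_apply by metis
  have sW: "\<sigma> m \<in> W" if "m \<in> {3..k}" for m
  proof -
    have m1: "m \<in> {1..k}" "m \<noteq> 1" "m \<noteq> 2" using that by auto
    have one: "(1::nat) \<in> {1..k}" "(2::nat) \<in> {1..k}" using k3 by auto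
    have "\<sigma> m \<noteq> \<sigma> 1"
    proof
      assume "\<sigma> m = \<sigma> 1"
      from inj_onD[OF inj this m1(1) one(1)] m1 show False by simp
    qed
    moreover have "\<sigma> m \<noteq> \<sigma> 2"
    proof
      assume "\<sigma> m = \<sigma> 2"
      from inj_onD[OF inj this m1(1) one(2)] m1 show False by simp
    qed
    ultimately have "\<sigma> m \<noteq> \<sigma> 1" "\<sigma> m \<noteq> \<sigma> 2" by auto
    hence "\<sigma> m \<noteq> i" "\<sigma> m \<noteq> j" using s1 by auto
    thus ?thesis using that sV W_def by auto
  qed
  have siW: "si w \<in> {3..k}" if "w \<in> W" for w
  proof -
    have w: "w \<in> V" "w \<noteq> i" "w \<noteq> j" using that W_def by auto
    have "si w \<in> {1..k}" "si w \<noteq> 1" "si w \<noteq> 2" using si1[OF w(1)] s1 w by auto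
    thus ?thesis by auto
  qed
  define F where "F = (\<lambda>y::nat \<Rightarrow> bool. G (\<lambda>w. y (si w)))"
  have sigF: "is_signature {1..k} F"
    unfolding is_signature_def F_def
  proof (intro conjI allI impI)
    fix x y :: "nat \<Rightarrow> bool" assume "\<forall>v\<in>{1..k}. x v = y v"
    thus "G (\<lambda>w. x (si w)) = G (\<lambda>w. y (si w))" using si1 by (intro sig_cong[OF sigG]) auto
  qed (use sigG is_signature_def in auto)
  have GF: "\<forall>y. G y = F (y \<circ> \<sigma>)"
    unfolding F_def by (auto intro!: sig_cong[OF sigG] simp: si1)
  have Fa: "\<forall>x. F (x(1 := False, 2 := True)) = 0"
  proof
    fix x :: "nat \<Rightarrow> bool"
    show "F (x(1 := False, 2 := True)) = 0" unfolding F_def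
      by (rule zG) (use si2 s1 k3 in auto)
  qed
  define z where "z = u \<circ> \<sigma>"
  define T where "T = (\<lambda>bb x. if bb = u (\<sigma> 3) then (if x then a u else b u)
                                else (if x then a v else b v))"
  have Tnn: "\<forall>a' b'. 0 \<le> T a' b'"
  proof -
    have nn: "\<forall>x. 0 \<le> G x" using sigG unfolding is_signature_def by blast
    show ?thesis by (simp add: T_def a_def b_def nn)
  qed
  have Tnd: "\<not> degenerate2 T"
  proof
    assume "degenerate2 T"
    then obtain U U' where UU: "\<And>a' b'. T a' b' = U a' * U' b'" unfolding degenerate2_def by blast
    have "T (u (\<sigma> 3)) True * T (\<not> u (\<sigma> 3)) False = T (u (\<sigma> 3)) False * T (\<not> u (\<sigma> 3)) True"
      by (simp add: UU)
    thus False using uv by (simp add: T_def mult.commute)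
  qed
  have s3: "\<sigma> 3 \<in> W" using sW k3 by auto
  have aW: "a Y = a Y'" "b Y = b Y'" if "\<forall>w\<in>W. Y w = Y' w" for Y Y'
    unfolding a_def b_def using that W_def ij by (auto intro!: sig_cong[OF sigG])
  have last: "F (y(1 := x, 2 := x)) =
                   (if (\<forall>i\<in>{3..k}. y i = z i) \<or> (\<forall>i\<in>{3..k}. y i = (\<not> z i))
                    then T (y 3) x else 0)" for x y
  proof -
    define Y where "Y = (\<lambda>w. y (si w))"
    have pw: "(y(1 := x, 2 := x)) (si w) = (Y(i := x, j := x)) w" if w: "w \<in> V" for w
    proof (cases "w = i \<or> w = j")
      case True thus ?thesis using si2 s1 k3 ij by (auto simp: Y_def)
    next
      case False
      hence "si w \<noteq> 1" "si w \<noteq> 2" using si1 w s1 by metis+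
      thus ?thesis using False by (simp add: Y_def)
    qed
    have "F (y(1 := x, 2 := x)) = G (Y(i:=x, j:=x))" unfolding F_def
      by (rule sig_cong[OF sigG]) (use pw in simp)
    also have "\<dots> = (if x then a Y else b Y)" by (simp add: a_def b_def)
    finally have FY: "F (y(1 := x, 2 := x)) = (if x then a Y else b Y)" .
    have c1: "(\<forall>m\<in>{3..k}. y m = z m) \<longleftrightarrow> (\<forall>w\<in>W. Y w = u w)"
    proof
      assume h: "\<forall>m\<in>{3..k}. y m = z m"
      show "\<forall>w\<in>W. Y w = u w"
      proof
        fix w assume "w \<in> W"
        thus "Y w = u w" using h siW si1 W_def by (auto simp: Y_def z_def)
      qed
    next
      assume h: "\<forall>w\<in>W. Y w = u w"
      show "\<forall>m\<in>{3..k}. y m = z m"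
      proof
        fix m assume m: "m \<in> {3..k}"
        have "Y (\<sigma> m) = y m" using si2 m by (simp add: Y_def)
        thus "y m = z m" using h sW m by (auto simp: z_def)
      qed
    qed
    have c2: "(\<forall>m\<in>{3..k}. y m = (\<not> z m)) \<longleftrightarrow> (\<forall>w\<in>W. Y w = v w)"
    proof
      assume h: "\<forall>m\<in>{3..k}. y m = (\<not> z m)"
      show "\<forall>w\<in>W. Y w = v w"
      proof
        fix w assume "w \<in> W"
        thus "Y w = v w" using h siW si1 W_def vu by (auto simp: Y_def z_def)
      qed
    next
      assume h: "\<forall>w\<in>W. Y w = v w"
      show "\<forall>m\<in>{3..k}. y m = (\<not> z m)"
      proof
        fix m assume m: "m \<in> {3..k}"
        have "Y (\<sigma> m) = y m" using si2 m by (simp add: Y_def)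
        thus "y m = (\<not> z m)" using h sW m vu by (auto simp: z_def)
      qed
    qed
    have y3: "y 3 = Y (\<sigma> 3)" using si2 k3 by (simp add: Y_def)
    show ?thesis
    proof (cases "\<forall>w\<in>W. Y w = u w")
      case True
      have cond: "(\<forall>m\<in>{3..k}. y m = z m) \<or> (\<forall>m\<in>{3..k}. y m = (\<not> z m))"
        using c1 True by blast
      have e3: "y 3 = u (\<sigma> 3)" using y3 True s3 by auto
      have "F (y(1 := x, 2 := x)) = T (y 3) x"
        using FY aW[OF True] e3 by (simp add: T_def)
      thus ?thesis by (subst if_P[OF cond])
    next
      case F1: False
      show ?thesis
      proof (cases "\<forall>w\<in>W. Y w = v w")
        case True
        have "y 3 \<noteq> u (\<sigma> 3)" using y3 True s3 vu by auto
        have cond: "(\<forall>m\<in>{3..k}. y m = z m) \<or> (\<forall>m\<in>{3..k}. y m = (\<not> z m))"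
          using c2 True by blast
        have "F (y(1 := x, 2 := x)) = T (y 3) x"
          using FY aW[OF True] \<open>y 3 \<noteq> u (\<sigma> 3)\<close> by (simp add: T_def)
        thus ?thesis by (subst if_P[OF cond])
      next
        case F2: False
        obtain w1 where w1: "w1 \<in> W" "Y w1 = u w1" using F1 F2 vu by blast
        obtain w2 where w2: "w2 \<in> W" "Y w2 = v w2" using F1 F2 vu by blast
        have e1: "a Y * b u = a u * b Y" using star[of w1 Y u, OF w1] .
        have e2: "a Y * b v = a v * b Y" using star[of w2 Y v, OF w2] .
        have "a Y * (a u * b v - a v * b u) = a u * (a Y * b v) - a v * (a Y * b u)"
          by (simp add: algebra_simps)
        also have "\<dots> = a u * (a v * b Y) - a v * (a u * b Y)" using e1 e2 by simp
        also have "\<dots> = 0" by (simp add: algebra_simps)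
        finally have "a Y = 0" using uv by simp
        have "b Y * (a u * b v - a v * b u) = b v * (a u * b Y) - b u * (a v * b Y)"
          by (simp add: algebra_simps)
        also have "\<dots> = b v * (a Y * b u) - b u * (a Y * b v)" using e1 e2 by simp
        also have "\<dots> = 0" by (simp add: algebra_simps)
        finally have "b Y = 0" using uv by simp
        have n1: "\<not> (\<forall>m\<in>{3..k}. y m = z m)" using c1 F1 by blast
        have n2: "\<not> (\<forall>m\<in>{3..k}. y m = (\<not> z m))" using c2 F2 by blast
        have "F (y(1 := x, 2 := x)) = 0" using FY \<open>a Y = 0\<close> \<open>b Y = 0\<close> by simp
        thus ?thesis using n1 n2 by (simp only: if_False disj_absorb simp_thms)
      qed
    qed
  qed
  show ?thesis
    apply (rule exI[of _ k], rule exI[of _ \<sigma>], rule exI[of _ F])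
    apply (intro conjI)
    apply (rule k3, rule bs, rule sigF, rule GF, rule Fa)
    apply (rule exI[of _ z], rule exI[of _ T])
    apply (intro conjI allI)
    apply (rule Tnn[rule_format], rule Tnd, rule last)
    done
qed

theorem mainTheorem12:
  fixes V :: "'v set" and G :: "('v \<Rightarrow> bool) \<Rightarrow> real"
  assumes sigG: "is_signature V G"
    and notIM: "\<not> IM_terraced V G"
    and pinsIM: "\<And>D p. D \<subseteq> V \<Longrightarrow> D \<noteq> {} \<Longrightarrow> IM_terraced (V - D) (pin G D p)"
  shows "\<exists>(k::nat) (\<sigma>::nat \<Rightarrow> 'v) (F :: (nat \<Rightarrow> bool) \<Rightarrow> real).
           3 \<le> k \<and> bij_betw \<sigma> {1..k} V \<and> is_signature {1..k} F \<and>
           (\<forall>y. G y = F (y \<circ> \<sigma>)) \<and>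
           (\<forall>x. F (x(1 := False, 2 := True)) = 0) \<and>
           (\<exists>(z :: nat \<Rightarrow> bool) (T :: bool \<Rightarrow> bool \<Rightarrow> real).
              (\<forall>a b. 0 \<le> T a b) \<and> \<not> degenerate2 T \<and>
              (\<forall>(x::bool) (y :: nat \<Rightarrow> bool).
                 F (y(1 := x, 2 := x)) =
                   (if (\<forall>i\<in>{3..k}. y i = z i) \<or> (\<forall>i\<in>{3..k}. y i = (\<not> z i))
                    then T (y 3) x else 0)))"
proof -
  have "\<exists>D p i j. D \<subseteq> V \<and> i \<in> D \<and> j \<in> D \<and> p i \<noteq> p j \<and>
    (\<forall>x. pin G D p x = 0) \<and> \<not> lin_dep (pin G D (flip p i)) (pin G D (flip p j))"
    using notIM unfolding IM_terraced_def by (simp only: not_all not_imp)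
  then obtain D p i j where DD: "D \<subseteq> V \<and> i \<in> D \<and> j \<in> D \<and> p i \<noteq> p j \<and>
    (\<forall>x. pin G D p x = 0) \<and> \<not> lin_dep (pin G D (flip p i)) (pin G D (flip p j))"
    by (elim exE)
  from DD have D: "D \<subseteq> V" "i \<in> D" "j \<in> D" "p i \<noteq> p j"
    "\<forall>x. pin G D p x = 0" "\<not> lin_dep (pin G D (flip p i)) (pin G D (flip p j))"
    by (simp_all only: DD simp_thms)
  show ?thesis
  proof (cases "p i")
    case True
    hence pj: "p j = False" using D(4) by simp
    have nld: "\<not> lin_dep (pin G D (flip p j)) (pin G D (flip p i))"
      using D(6) unfolding lin_dep_def by blast
    have pi: "p i = True" using True by simp
    show ?thesis by (rule main_aux[OF sigG pinsIM D(1) D(3) D(2) pj pi D(5) nld])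
  next
    case False
    hence pj: "p j = True" using D(4) by simp
    have pi: "p i = False" using False by simp
    show ?thesis by (rule main_aux[OF sigG pinsIM D(1) D(2) D(3) pi pj D(5) D(6)])
  qed
qed

end
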